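(* Let $\mathcal{H}_1=(\mathcal{A}_1,\Delta_{\mathcal{A}_1},S_{\mathcal{A}_1},\varepsilon_{\mathcal{A}_1})$ and $\mathcal{H}_2=(\mathcal{A}_2,\Delta_{\mathcal{A}_2},S_{\mathcal{A}_2},\varepsilon_{\mathcal{A}_2})$ be Hopf algebras over a field $k$, $\mathcal{B}$ a unital $k$-algebra, and $\alpha:\mathcal{A}_1\to\mathcal{B}\otimes\mathcal{A}_2$ a quantum family of homomorphisms from $\mathcal{H}_1$ to $\mathcal{H}_2$. Then $\alpha\circ S_{\mathcal{A}_1}=(\mathrm{id}_{\mathcal{B}}\otimes S_{\mathcal{A}_2})\circ\alpha$.
   Context: Sweedler notation $\Delta(a)=a_{(1)}\otimes a_{(2)}$. For $x\in\mathcal{B}\otimes\mathcal{A}_2$, $x_{12}$ and $x_{13}$ denote $x$ placed in legs (1,2), resp. (1,3), of $\mathcal{B}\otimes\mathcal{A}_2\otimes\mathcal{A}_2$ with $\mathds{1}$ in the remaining leg. Definition: a unital algebra homomorphism $\alpha:\mathcal{A}_1\to\mathcal{B}\otimes\mathcal{A}_2$ is a quantum family of homomorphisms from $\mathcal{H}_1$ to $\mathcal{H}_2$ if $\alpha(a_{(1)})_{12}\alpha(a_{(2)})_{13}=(\mathrm{id}_{\mathcal{B}}\otimes\Delta_{\mathcal{A}_2})(\alpha(a))$ for all $a\in\mathcal{A}_1$. *)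

theory Defs
  imports "HOL-Library.Poly_Mapping"
begin

text \<open>Vector spaces over a field 'k are represented by their coordinates with respect
to a basis indexed by a type 'i, i.e. as finitely supported functions from i to k.
The tensor product of spaces with bases 'i and 'j is the space with basis 'i \<times> 'j.\<close>

definition smult :: "'k::field \<Rightarrow> ('i \<Rightarrow>\<^sub>0 'k) \<Rightarrow> ('i \<Rightarrow>\<^sub>0 'k)" where
  "smult c v = Poly_Mapping.map (\<lambda>a. c * a) v"

definition basis_vec :: "'i \<Rightarrow> ('i \<Rightarrow>\<^sub>0 'k::field)" where
  "basis_vec i = Poly_Mapping.single i 1"

definition lin_ext :: "('i \<Rightarrow> ('j \<Rightarrow>\<^sub>0 'k::field)) \<Rightarrow> ('i \<Rightarrow>\<^sub>0 'k) \<Rightarrow> ('j \<Rightarrow>\<^sub>0 'k)" where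
  "lin_ext h x = (\<Sum>i\<in>Poly_Mapping.keys x. smult (Poly_Mapping.lookup x i) (h i))"

lift_definition tprod :: "('a \<Rightarrow>\<^sub>0 'k::field) \<Rightarrow> ('b \<Rightarrow>\<^sub>0 'k) \<Rightarrow> ('a \<times> 'b \<Rightarrow>\<^sub>0 'k)"
  is "\<lambda>f g (a, b). f a * g b"
proof -
  fix f :: "'a \<Rightarrow> 'k" and g :: "'b \<Rightarrow> 'k"
  assume f: "finite {x. f x \<noteq> 0}" and g: "finite {x. g x \<noteq> 0}"
  have "{x. (case x of (a, b) \<Rightarrow> f a * g b) \<noteq> 0} \<subseteq> {x. f x \<noteq> 0} \<times> {x. g x \<noteq> 0}"
    by auto
  then show "finite {x. (case x of (a, b) \<Rightarrow> f a * g b) \<noteq> 0}"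
    using f g by (meson finite_SigmaI finite_subset)
qed

definition tmap :: "(('a \<Rightarrow>\<^sub>0 'k::field) \<Rightarrow> ('c \<Rightarrow>\<^sub>0 'k)) \<Rightarrow> (('b \<Rightarrow>\<^sub>0 'k) \<Rightarrow> ('d \<Rightarrow>\<^sub>0 'k))
    \<Rightarrow> ('a \<times> 'b \<Rightarrow>\<^sub>0 'k) \<Rightarrow> ('c \<times> 'd \<Rightarrow>\<^sub>0 'k)" where
  "tmap f g = lin_ext (\<lambda>(i, j). tprod (f (basis_vec i)) (g (basis_vec j)))"

definition tmult :: "(('a \<Rightarrow>\<^sub>0 'k::field) \<Rightarrow> ('a \<Rightarrow>\<^sub>0 'k) \<Rightarrow> ('a \<Rightarrow>\<^sub>0 'k))
    \<Rightarrow> (('b \<Rightarrow>\<^sub>0 'k) \<Rightarrow> ('b \<Rightarrow>\<^sub>0 'k) \<Rightarrow> ('b \<Rightarrow>\<^sub>0 'k))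
    \<Rightarrow> ('a \<times> 'b \<Rightarrow>\<^sub>0 'k) \<Rightarrow> ('a \<times> 'b \<Rightarrow>\<^sub>0 'k) \<Rightarrow> ('a \<times> 'b \<Rightarrow>\<^sub>0 'k)" where
  "tmult mA mB x y =
     (\<Sum>p\<in>Poly_Mapping.keys x. \<Sum>q\<in>Poly_Mapping.keys y. smult (Poly_Mapping.lookup x p * Poly_Mapping.lookup y q)
        (tprod (mA (basis_vec (fst p)) (basis_vec (fst q))) (mB (basis_vec (snd p)) (basis_vec (snd q)))))"

definition linear_map :: "(('i \<Rightarrow>\<^sub>0 'k::field) \<Rightarrow> ('j \<Rightarrow>\<^sub>0 'k)) \<Rightarrow> bool" where
  "linear_map f \<longleftrightarrow> (\<forall>x y. f (x + y) = f x + f y) \<and> (\<forall>c x. f (smult c x) = smult c (f x))"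

definition linear_functional :: "(('i \<Rightarrow>\<^sub>0 'k::field) \<Rightarrow> 'k) \<Rightarrow> bool" where
  "linear_functional f \<longleftrightarrow> (\<forall>x y. f (x + y) = f x + f y) \<and> (\<forall>c x. f (smult c x) = c * f x)"

definition unital_algebra :: "(('i \<Rightarrow>\<^sub>0 'k::field) \<Rightarrow> ('i \<Rightarrow>\<^sub>0 'k) \<Rightarrow> ('i \<Rightarrow>\<^sub>0 'k))
    \<Rightarrow> ('i \<Rightarrow>\<^sub>0 'k) \<Rightarrow> bool" where
  "unital_algebra m u \<longleftrightarrow>
     (\<forall>x. linear_map (m x)) \<and> (\<forall>y. linear_map (\<lambda>x. m x y)) \<and>
     (\<forall>x y z. m (m x y) z = m x (m y z)) \<and> (\<forall>x. m u x = x \<and> m x u = x)"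

definition unital_algebra_hom :: "(('i \<Rightarrow>\<^sub>0 'k::field) \<Rightarrow> ('i \<Rightarrow>\<^sub>0 'k) \<Rightarrow> ('i \<Rightarrow>\<^sub>0 'k))
    \<Rightarrow> ('i \<Rightarrow>\<^sub>0 'k) \<Rightarrow> (('j \<Rightarrow>\<^sub>0 'k) \<Rightarrow> ('j \<Rightarrow>\<^sub>0 'k) \<Rightarrow> ('j \<Rightarrow>\<^sub>0 'k)) \<Rightarrow> ('j \<Rightarrow>\<^sub>0 'k)
    \<Rightarrow> (('i \<Rightarrow>\<^sub>0 'k) \<Rightarrow> ('j \<Rightarrow>\<^sub>0 'k)) \<Rightarrow> bool" where
  "unital_algebra_hom m u m' u' f \<longleftrightarrow>
     linear_map f \<and> (\<forall>x y. f (m x y) = m' (f x) (f y)) \<and> f u = u'"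

definition assoc3 :: "(('a \<times> 'b) \<times> 'c \<Rightarrow>\<^sub>0 'k::field) \<Rightarrow> ('a \<times> ('b \<times> 'c) \<Rightarrow>\<^sub>0 'k)" where
  "assoc3 = lin_ext (\<lambda>((a, b), c). basis_vec (a, (b, c)))"

definition hopf_algebra :: "(('i \<Rightarrow>\<^sub>0 'k::field) \<Rightarrow> ('i \<Rightarrow>\<^sub>0 'k) \<Rightarrow> ('i \<Rightarrow>\<^sub>0 'k))
    \<Rightarrow> ('i \<Rightarrow>\<^sub>0 'k) \<Rightarrow> (('i \<Rightarrow>\<^sub>0 'k) \<Rightarrow> ('i \<times> 'i \<Rightarrow>\<^sub>0 'k)) \<Rightarrow> (('i \<Rightarrow>\<^sub>0 'k) \<Rightarrow> 'k)
    \<Rightarrow> (('i \<Rightarrow>\<^sub>0 'k) \<Rightarrow> ('i \<Rightarrow>\<^sub>0 'k)) \<Rightarrow> bool" where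
  "hopf_algebra m u \<Delta> \<epsilon> S \<longleftrightarrow>
     unital_algebra m u \<and> linear_map \<Delta> \<and> linear_functional \<epsilon> \<and> linear_map S \<and>
     \<comment> \<open>coassociativity\<close>
     (\<forall>x. assoc3 (tmap \<Delta> id (\<Delta> x)) = tmap id \<Delta> (\<Delta> x)) \<and>
     \<comment> \<open>counit\<close>
     (\<forall>x. lin_ext (\<lambda>(i, j). smult (\<epsilon> (basis_vec i)) (basis_vec j)) (\<Delta> x) = x) \<and>
     (\<forall>x. lin_ext (\<lambda>(i, j). smult (\<epsilon> (basis_vec j)) (basis_vec i)) (\<Delta> x) = x) \<and>
     \<comment> \<open>\<Delta> and \<epsilon> are unital algebra homomorphisms\<close>
     unital_algebra_hom m u (tmult m m) (tprod u u) \<Delta> \<and>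
     (\<forall>x y. \<epsilon> (m x y) = \<epsilon> x * \<epsilon> y) \<and> \<epsilon> u = 1 \<and>
     \<comment> \<open>antipode: m (S \<otimes> id) \<Delta> = u \<epsilon> = m (id \<otimes> S) \<Delta>\<close>
     (\<forall>x. lin_ext (\<lambda>(i, j). m (S (basis_vec i)) (basis_vec j)) (\<Delta> x) = smult (\<epsilon> x) u) \<and>
     (\<forall>x. lin_ext (\<lambda>(i, j). m (basis_vec i) (S (basis_vec j))) (\<Delta> x) = smult (\<epsilon> x) u)"

text \<open>Leg notation: for x in B \<otimes> A, x_12 = x \<otimes> 1 and x_13 in B \<otimes> A \<otimes> A.\<close>
definition leg12 :: "('a \<Rightarrow>\<^sub>0 'k::field) \<Rightarrow> ('b \<times> 'a \<Rightarrow>\<^sub>0 'k) \<Rightarrow> ('b \<times> ('a \<times> 'a) \<Rightarrow>\<^sub>0 'k)" where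
  "leg12 one = lin_ext (\<lambda>(b, a). tprod (basis_vec b) (tprod (basis_vec a) one))"

definition leg13 :: "('a \<Rightarrow>\<^sub>0 'k::field) \<Rightarrow> ('b \<times> 'a \<Rightarrow>\<^sub>0 'k) \<Rightarrow> ('b \<times> ('a \<times> 'a) \<Rightarrow>\<^sub>0 'k)" where
  "leg13 one = lin_ext (\<lambda>(b, a). tprod (basis_vec b) (tprod one (basis_vec a)))"

text \<open>Quantum family of homomorphisms \<alpha> : A1 \<rightarrow> B \<otimes> A2:
  a unital algebra hom with \<alpha>(a_(1))_12 \<alpha>(a_(2))_13 = (id \<otimes> \<Delta>2)(\<alpha> a).
  The Sweedler sum is the linear extension over the coordinates of \<Delta>1 a.\<close>
definition quantum_family_hom ::
  "(('b \<Rightarrow>\<^sub>0 'k::field) \<Rightarrow> ('b \<Rightarrow>\<^sub>0 'k) \<Rightarrow> ('b \<Rightarrow>\<^sub>0 'k)) \<Rightarrow> ('b \<Rightarrow>\<^sub>0 'k)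
   \<Rightarrow> (('i \<Rightarrow>\<^sub>0 'k) \<Rightarrow> ('i \<Rightarrow>\<^sub>0 'k) \<Rightarrow> ('i \<Rightarrow>\<^sub>0 'k)) \<Rightarrow> ('i \<Rightarrow>\<^sub>0 'k) \<Rightarrow> (('i \<Rightarrow>\<^sub>0 'k) \<Rightarrow> ('i \<times> 'i \<Rightarrow>\<^sub>0 'k))
   \<Rightarrow> (('j \<Rightarrow>\<^sub>0 'k) \<Rightarrow> ('j \<Rightarrow>\<^sub>0 'k) \<Rightarrow> ('j \<Rightarrow>\<^sub>0 'k)) \<Rightarrow> ('j \<Rightarrow>\<^sub>0 'k) \<Rightarrow> (('j \<Rightarrow>\<^sub>0 'k) \<Rightarrow> ('j \<times> 'j \<Rightarrow>\<^sub>0 'k))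
   \<Rightarrow> (('i \<Rightarrow>\<^sub>0 'k) \<Rightarrow> ('b \<times> 'j \<Rightarrow>\<^sub>0 'k)) \<Rightarrow> bool" where
  "quantum_family_hom mB uB m1 u1 \<Delta>1 m2 u2 \<Delta>2 \<alpha> \<longleftrightarrow>
     unital_algebra_hom m1 u1 (tmult mB m2) (tprod uB u2) \<alpha> \<and>
     (\<forall>a. lin_ext (\<lambda>(i, j). tmult mB (tmult m2 m2) (leg12 u2 (\<alpha> (basis_vec i))) (leg13 u2 (\<alpha> (basis_vec j))))
            (\<Delta>1 a)
          = tmap id \<Delta>2 (\<alpha> a))"

end

theory Submission
  imports Defs
begin

lemma lookup_smult[simp]: "Poly_Mapping.lookup (smult c v) i = c * Poly_Mapping.lookup v i"
  by (simp add: smult_def map.rep_eq when_def)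

lemma smult_add_right: "smult c (x + y) = smult c x + smult c y"
  by (rule poly_mapping_eqI) (simp add: lookup_add algebra_simps)
lemma smult_add_left: "smult (c + d) x = smult c x + smult d x"
  by (rule poly_mapping_eqI) (simp add: lookup_add algebra_simps)
lemma smult_zero_left[simp]: "smult 0 x = 0"
  by (rule poly_mapping_eqI) simp
lemma smult_zero_right[simp]: "smult c 0 = 0"
  by (rule poly_mapping_eqI) simp
lemma smult_one[simp]: "smult 1 x = x"
  by (rule poly_mapping_eqI) simp
lemma smult_smult[simp]: "smult c (smult d x) = smult (c * d) x"
  by (rule poly_mapping_eqI) (simp add: algebra_simps)
lemma smult_sum: "smult c (sum f A) = (\<Sum>a\<in>A. smult c (f a))"
  by (rule poly_mapping_eqI) (simp add: lookup_sum sum_distrib_left)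

lemma lin_ext_superset:
  assumes "finite A" "Poly_Mapping.keys x \<subseteq> A"
  shows "lin_ext h x = (\<Sum>i\<in>A. smult (Poly_Mapping.lookup x i) (h i))"
  unfolding lin_ext_def
  by (rule sum.mono_neutral_left) (use assms in \<open>auto simp: in_keys_iff\<close>)

lemma lin_ext_add: "lin_ext h (x + y) = lin_ext h x + lin_ext h y"
proof -
  let ?A = "Poly_Mapping.keys x \<union> Poly_Mapping.keys y"
  have "Poly_Mapping.keys (x+y) \<subseteq> ?A" by (rule keys_add)
  then show ?thesis
    by (simp add: lin_ext_superset[of ?A] lookup_add smult_add_left sum.distrib)
qed

lemma keys_smult: "Poly_Mapping.keys (smult c x) \<subseteq> Poly_Mapping.keys x"
  by (auto simp: in_keys_iff)

lemma lin_ext_smult: "lin_ext h (smult c x) = smult c (lin_ext h x)"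
  by (simp add: lin_ext_superset[of "Poly_Mapping.keys x"] keys_smult smult_sum)

lemma linear_lin_ext[simp]: "linear_map (lin_ext h)"
  by (simp add: linear_map_def lin_ext_add lin_ext_smult)

lemma lin_ext_basis[simp]: "lin_ext h (basis_vec i) = (h i :: _ \<Rightarrow>\<^sub>0 'k::field)"
  by (simp add: lin_ext_def basis_vec_def)

lemma lin_ext_cong: "(\<And>i. h i = h' i) \<Longrightarrow> lin_ext h x = lin_ext h' x"
  by (simp add: lin_ext_def)

lemma lin_ext_basis_vec: "lin_ext basis_vec x = (x :: _ \<Rightarrow>\<^sub>0 'k::field)"
proof (rule poly_mapping_eqI)
  fix k
  show "Poly_Mapping.lookup (lin_ext basis_vec x) k = Poly_Mapping.lookup x k"
  proof -
    have e: "\<And>xa. Poly_Mapping.lookup x xa * (if xa = k then 1 else 0) = (if xa = k then Poly_Mapping.lookup x xa else 0)"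
      by auto
    show ?thesis unfolding lin_ext_def basis_vec_def lookup_sum lookup_smult
      by (simp add: lookup_single when_def e sum.delta in_keys_iff)
  qed
qed

lemma linear_add: "linear_map f \<Longrightarrow> f (x + y) = f x + f y"
  by (simp add: linear_map_def)
lemma linear_smult: "linear_map f \<Longrightarrow> f (smult c x) = smult c (f x)"
  by (simp add: linear_map_def)
lemma linear_zero: "linear_map f \<Longrightarrow> f 0 = 0"
  using linear_smult[of f 0 0] by simp
lemma linear_sum: "linear_map f \<Longrightarrow> f (sum g A) = (\<Sum>a\<in>A. f (g a))"
  by (induction A rule: infinite_finite_induct) (auto simp: linear_zero linear_add)

lemma linear_lin_ext_comm: "linear_map f \<Longrightarrow> f (lin_ext h x) = lin_ext (\<lambda>i. f (h i)) x"
  by (simp add: lin_ext_def linear_sum linear_smult)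

lemma linear_rep: "linear_map f \<Longrightarrow> f x = lin_ext (\<lambda>i. f (basis_vec i)) x"
  using linear_lin_ext_comm[of f basis_vec x] by (simp add: lin_ext_basis_vec)

lemma lin_unique:
  assumes "linear_map f" "linear_map g" "\<And>i. f (basis_vec i) = g (basis_vec i)"
  shows "f x = g x"
  using assms linear_rep[of f x] linear_rep[of g x] by simp

lemma lin_ext_fun_add: "lin_ext (\<lambda>i. h i + h' i) x = lin_ext h x + lin_ext h' x"
  by (simp add: lin_ext_def smult_add_right sum.distrib)
lemma lin_ext_fun_smult: "lin_ext (\<lambda>i. smult c (h i)) x = smult c (lin_ext h x)"
  by (simp add: lin_ext_def smult_sum mult.commute)

lemma lookup_tprod[simp]: "Poly_Mapping.lookup (tprod f g) (a, b) = Poly_Mapping.lookup f a * Poly_Mapping.lookup g b"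
  by (simp add: tprod.rep_eq)

lemma tprod_add1: "tprod (x + y) z = tprod x z + tprod y z"
  by (rule poly_mapping_eqI) (auto simp: lookup_add algebra_simps)
lemma tprod_add2: "tprod z (x + y) = tprod z x + tprod z y"
  by (rule poly_mapping_eqI) (auto simp: lookup_add algebra_simps)
lemma tprod_smult1: "tprod (smult c x) z = smult c (tprod x z)"
  by (rule poly_mapping_eqI) (auto simp: algebra_simps)
lemma tprod_smult2: "tprod z (smult c x) = smult c (tprod z x)"
  by (rule poly_mapping_eqI) (auto simp: algebra_simps)
lemma tprod_basis: "tprod (basis_vec i) (basis_vec j) = (basis_vec (i, j) :: _ \<Rightarrow>\<^sub>0 'k::field)"
  by (rule poly_mapping_eqI) (auto simp: basis_vec_def lookup_single when_def split: if_splits)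

lemma tmult_lin_ext: "tmult mA mB x y = lin_ext (\<lambda>p. lin_ext (\<lambda>q.
      tprod (mA (basis_vec (fst p)) (basis_vec (fst q))) (mB (basis_vec (snd p)) (basis_vec (snd q)))) y) x"
  by (simp add: tmult_def lin_ext_def smult_sum)

lemma tmult_add1: "tmult mA mB (x + x') y = tmult mA mB x y + tmult mA mB x' y"
  by (simp add: tmult_lin_ext lin_ext_add)
lemma tmult_smult1: "tmult mA mB (smult c x) y = smult c (tmult mA mB x y)"
  by (simp add: tmult_lin_ext lin_ext_smult)
lemma tmult_add2: "tmult mA mB x (y + y') = tmult mA mB x y + tmult mA mB x y'"
  by (simp add: tmult_lin_ext lin_ext_add lin_ext_fun_add)
lemma tmult_smult2: "tmult mA mB x (smult c y) = smult c (tmult mA mB x y)"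
  by (simp add: tmult_lin_ext lin_ext_smult lin_ext_fun_smult)
lemma tmult_basis: "tmult mA mB (basis_vec (a,b)) (basis_vec (c,d)) =
   tprod (mA (basis_vec a) (basis_vec c)) (mB (basis_vec b) (basis_vec d))"
  by (simp add: tmult_lin_ext)


definition bilin :: "(('i \<Rightarrow>\<^sub>0 'k::field) \<Rightarrow> ('j \<Rightarrow>\<^sub>0 'k) \<Rightarrow> ('l \<Rightarrow>\<^sub>0 'k)) \<Rightarrow> bool" where
  "bilin M \<longleftrightarrow> (\<forall>x. linear_map (M x)) \<and> (\<forall>y. linear_map (\<lambda>x. M x y))"

lemma bilinD:
  assumes "bilin M"
  shows "M (x + x') y = M x y + M x' y" "M x (y + y') = M x y + M x y'"
        "M (smult c x) y = smult c (M x y)" "M x (smult c y) = smult c (M x y)"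
  using assms unfolding bilin_def linear_map_def by auto

lemma bilin_tmult: "bilin (tmult mA mB)"
  by (simp add: bilin_def linear_map_def tmult_add1 tmult_add2 tmult_smult1 tmult_smult2)

lemma unital_bilin: "unital_algebra m u \<Longrightarrow> bilin m"
  by (simp add: unital_algebra_def bilin_def)

lemmas tsimps = tprod_add1 tprod_add2 tprod_smult1 tprod_smult2 tmult_add1 tmult_add2
  tmult_smult1 tmult_smult2 lin_ext_add lin_ext_smult

lemma tmult_tprod:
  assumes M: "bilin M" and N: "bilin N"
  shows "tmult M N (tprod a b) (tprod c d) = tprod (M a c) (N b d)"
proof -
  note ms = bilinD[OF M] bilinD[OF N]
  have s1: "tmult M N (tprod (basis_vec p) (basis_vec q)) (tprod (basis_vec r) (basis_vec s))
     = tprod (M (basis_vec p) (basis_vec r)) (N (basis_vec q) (basis_vec s))" for p q r s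
    by (simp add: tprod_basis tmult_basis)
  have s2: "tmult M N (tprod (basis_vec p) (basis_vec q)) (tprod (basis_vec r) d)
     = tprod (M (basis_vec p) (basis_vec r)) (N (basis_vec q) d)" for p q r d
    by (rule lin_unique[where f="\<lambda>d. tmult M N (tprod (basis_vec p) (basis_vec q)) (tprod (basis_vec r) d)"])
       (auto simp: linear_map_def tsimps ms s1)
  have s3: "tmult M N (tprod (basis_vec p) (basis_vec q)) (tprod c d)
     = tprod (M (basis_vec p) c) (N (basis_vec q) d)" for p q c d
    by (rule lin_unique[where f="\<lambda>c. tmult M N (tprod (basis_vec p) (basis_vec q)) (tprod c d)"])
       (auto simp: linear_map_def tsimps ms s2)
  have s4: "tmult M N (tprod (basis_vec p) b) (tprod c d)
     = tprod (M (basis_vec p) c) (N b d)" for p b c d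
    by (rule lin_unique[where f="\<lambda>b. tmult M N (tprod (basis_vec p) b) (tprod c d)"])
       (auto simp: linear_map_def tsimps ms s3)
  show ?thesis
    by (rule lin_unique[where f="\<lambda>a. tmult M N (tprod a b) (tprod c d)"])
       (auto simp: linear_map_def tsimps ms s4)
qed

lemma linear_tmap[simp]: "linear_map (tmap f g)"
  by (simp add: tmap_def)

lemma tmap_tprod:
  assumes "linear_map f" "linear_map g"
  shows "tmap f g (tprod x y) = tprod (f x) (g y)"
proof -
  note ls = linear_add[OF assms(1)] linear_smult[OF assms(1)] linear_add[OF assms(2)] linear_smult[OF assms(2)]
  have s1: "tmap f g (tprod (basis_vec i) y) = tprod (f (basis_vec i)) (g y)" for i
    by (rule lin_unique[where f="\<lambda>y. tmap f g (tprod (basis_vec i) y)"])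
       (auto simp: linear_map_def tsimps ls tmap_def tprod_basis)
  show ?thesis
    by (rule lin_unique[where f="\<lambda>x. tmap f g (tprod x y)"])
       (auto simp: linear_map_def tsimps ls s1 linear_add[OF linear_tmap] linear_smult[OF linear_tmap])
qed


lemma tmap_basis: "tmap f g (basis_vec (i, j)) = tprod (f (basis_vec i)) (g (basis_vec j))"
  by (simp add: tmap_def)

lemma tmap_comp:
  assumes "linear_map f" "linear_map g"
  shows "tmap f g (tmap f' g' x) = tmap (\<lambda>v. f (f' v)) (\<lambda>v. g (g' v)) x"
  unfolding tmap_def[of f' g'] linear_lin_ext_comm[OF linear_tmap]
  by (simp add: tmap_def[of "\<lambda>v. f (f' v)"] split_def tmap_tprod[OF assms])

lemma tmap_id: "tmap (\<lambda>v. v) (\<lambda>v. v) x = x"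
  by (simp add: tmap_def tprod_basis case_prod_beta lin_ext_basis_vec)

lemma tmult_unital:
  assumes A: "unital_algebra mA uA" and B: "unital_algebra mB uB"
  shows "unital_algebra (tmult mA mB) (tprod uA uB)"
proof -
  note bA = unital_bilin[OF A] and bB = unital_bilin[OF B]
  note ms = bilinD[OF bA] bilinD[OF bB]
  have aA: "mA (mA x y) z = mA x (mA y z)" "mA uA x = x" "mA x uA = x" for x y z
    using A by (auto simp: unital_algebra_def)
  have aB: "mB (mB x y) z = mB x (mB y z)" "mB uB x = x" "mB x uB = x" for x y z
    using B by (auto simp: unital_algebra_def)
  note tt = tmult_tprod[OF bA bB]
  have eb: "basis_vec (i,j) = tprod (basis_vec i) (basis_vec j)" for i j
    by (simp add: tprod_basis)
  have u1: "tmult mA mB (tprod uA uB) x = x" for x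
    by (rule lin_unique[where f="\<lambda>x. tmult mA mB (tprod uA uB) x" and g="\<lambda>x. x"])
       (auto simp: linear_map_def tsimps eb tt aA aB)
  have u2: "tmult mA mB x (tprod uA uB) = x" for x
    by (rule lin_unique[where f="\<lambda>x. tmult mA mB x (tprod uA uB)" and g="\<lambda>x. x"])
       (auto simp: linear_map_def tsimps eb tt aA aB)
  have as0: "tmult mA mB (tmult mA mB (basis_vec (a,b)) (basis_vec (c,d))) (basis_vec (e,f)) =
       tmult mA mB (basis_vec (a,b)) (tmult mA mB (basis_vec (c,d)) (basis_vec (e,f)))" for a b c d e f
    by (simp add: eb tt aA aB)
  have as1: "tmult mA mB (tmult mA mB (basis_vec p) (basis_vec q)) (basis_vec r) =
       tmult mA mB (basis_vec p) (tmult mA mB (basis_vec q) (basis_vec r))" for p q r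
    using as0[of "fst p" "snd p" "fst q" "snd q" "fst r" "snd r"] by simp
  have as2: "tmult mA mB (tmult mA mB (basis_vec p) (basis_vec q)) z =
       tmult mA mB (basis_vec p) (tmult mA mB (basis_vec q) z)" for p q z
    by (rule lin_unique[where f="\<lambda>z. tmult mA mB (tmult mA mB (basis_vec p) (basis_vec q)) z"])
       (auto simp: linear_map_def tsimps as1)
  have as3: "tmult mA mB (tmult mA mB (basis_vec p) y) z =
       tmult mA mB (basis_vec p) (tmult mA mB y z)" for p y z
    by (rule lin_unique[where f="\<lambda>y. tmult mA mB (tmult mA mB (basis_vec p) y) z"])
       (auto simp: linear_map_def tsimps as2)
  have as4: "tmult mA mB (tmult mA mB x y) z = tmult mA mB x (tmult mA mB y z)" for x y z
    by (rule lin_unique[where f="\<lambda>x. tmult mA mB (tmult mA mB x y) z"])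
       (auto simp: linear_map_def tsimps as3)
  show ?thesis
    using bilin_tmult[of mA mB] u1 u2 as4 by (simp add: unital_algebra_def bilin_def)
qed


definition conv where
  "conv M \<Delta> f g a = lin_ext (\<lambda>(i, j). M (f (basis_vec i)) (g (basis_vec j))) (\<Delta> a)"

lemma conv_assoc:
  assumes M: "bilin M" and MA: "\<And>x y z. M (M x y) z = M x (M y z)"
    and CA: "\<And>x. assoc3 (tmap \<Delta> id (\<Delta> x)) = tmap id \<Delta> (\<Delta> x)"
  shows "conv M \<Delta> (conv M \<Delta> f g) h a = conv M \<Delta> f (conv M \<Delta> g h) a"
proof -
  note ms = bilinD[OF M]
  let ?P = "lin_ext (\<lambda>((i, j), k). M (M (f (basis_vec i)) (g (basis_vec j))) (h (basis_vec k)))"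
  let ?Q = "lin_ext (\<lambda>(i, (j, k)). M (f (basis_vec i)) (M (g (basis_vec j)) (h (basis_vec k))))"
  note lt = linear_add[OF linear_tmap] linear_smult[OF linear_tmap]
  have k1: "?P (tprod w (basis_vec j)) = M (lin_ext (\<lambda>(p, q). M (f (basis_vec p)) (g (basis_vec q))) w) (h (basis_vec j))" for w j
    by (rule lin_unique[where f="\<lambda>w. ?P (tprod w (basis_vec j))"])
       (auto simp: linear_map_def tsimps ms tprod_basis split_def)
  have l1: "lin_ext (\<lambda>(i, j). M (conv M \<Delta> f g (basis_vec i)) (h (basis_vec j))) z = ?P (tmap \<Delta> id z)" for z
    apply (rule lin_unique[where g="\<lambda>z. ?P (tmap \<Delta> id z)"])
      apply (auto simp: linear_map_def tsimps lt)[2]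
    subgoal for x by (cases x) (simp add: tmap_basis k1 conv_def)
    done
  have k2: "?Q (tprod (basis_vec i) w) = M (f (basis_vec i)) (lin_ext (\<lambda>(p, q). M (g (basis_vec p)) (h (basis_vec q))) w)" for w i
    by (rule lin_unique[where f="\<lambda>w. ?Q (tprod (basis_vec i) w)"])
       (auto simp: linear_map_def tsimps ms tprod_basis split_def)
  have l2: "lin_ext (\<lambda>(i, j). M (f (basis_vec i)) (conv M \<Delta> g h (basis_vec j))) z = ?Q (tmap id \<Delta> z)" for z
    apply (rule lin_unique[where g="\<lambda>z. ?Q (tmap id \<Delta> z)"])
      apply (auto simp: linear_map_def tsimps lt)[2]
    subgoal for x by (cases x) (simp add: tmap_basis k2 conv_def)
    done
  have l3: "?Q (assoc3 w) = ?P w" for w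
    by (rule lin_unique[where f="\<lambda>w. ?Q (assoc3 w)"])
       (auto simp: linear_map_def tsimps split_def assoc3_def MA)
  show ?thesis
    unfolding conv_def[of M \<Delta> "conv M \<Delta> f g"] conv_def[of M \<Delta> f "conv M \<Delta> g h"] l1 l2
    by (simp add: CA[symmetric] l3)
qed

lemma conv_unit_right:
  assumes f: "linear_map f" and M: "bilin M" and U: "\<And>x. M x U = x"
    and CU: "\<And>x. lin_ext (\<lambda>(i, j). smult (\<epsilon> (basis_vec j)) (basis_vec i)) (\<Delta> x) = x"
  shows "conv M \<Delta> f (\<lambda>a. smult (\<epsilon> a) U) a = f a"
proof -
  have "conv M \<Delta> f (\<lambda>a. smult (\<epsilon> a) U) a
      = lin_ext (\<lambda>p. f (case p of (i, j) \<Rightarrow> smult (\<epsilon> (basis_vec j)) (basis_vec i))) (\<Delta> a)"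
    unfolding conv_def
    by (rule lin_ext_cong) (auto simp: bilinD[OF M] U linear_smult[OF f])
  also have "\<dots> = f a"
    by (simp add: linear_lin_ext_comm[OF f, symmetric] CU)
  finally show ?thesis .
qed

lemma conv_unit_left:
  assumes f: "linear_map f" and M: "bilin M" and U: "\<And>x. M U x = x"
    and CU: "\<And>x. lin_ext (\<lambda>(i, j). smult (\<epsilon> (basis_vec i)) (basis_vec j)) (\<Delta> x) = x"
  shows "conv M \<Delta> (\<lambda>a. smult (\<epsilon> a) U) f a = f a"
proof -
  have "conv M \<Delta> (\<lambda>a. smult (\<epsilon> a) U) f a
      = lin_ext (\<lambda>p. f (case p of (i, j) \<Rightarrow> smult (\<epsilon> (basis_vec i)) (basis_vec j))) (\<Delta> a)"
    unfolding conv_def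
    by (rule lin_ext_cong) (auto simp: bilinD[OF M] U linear_smult[OF f])
  also have "\<dots> = f a"
    by (simp add: linear_lin_ext_comm[OF f, symmetric] CU)
  finally show ?thesis .
qed


lemma linear_id[simp]: "linear_map id" "linear_map (\<lambda>x. x)"
  by (simp_all add: linear_map_def)

lemma leg_lin: "linear_map (leg12 u)" "linear_map (leg13 u)"
  by (simp_all add: leg12_def leg13_def)

lemma legs:
  assumes mB: "bilin mB" and m2: "unital_algebra m2 u2" and G: "linear_map G" and K: "bilin K"
    and KB: "\<And>b p c q. K (basis_vec (b, p)) (basis_vec (c, q)) =
        tprod (mB (basis_vec b) (basis_vec c)) (G (basis_vec (p, q)))"
  shows "tmap id G (tmult mB (tmult m2 m2) (leg12 u2 X) (leg13 u2 Y)) = K X Y"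
proof -
  note b2 = unital_bilin[OF m2]
  have u: "m2 u2 x = x" "m2 x u2 = x" for x using m2 by (auto simp: unital_algebra_def)
  note lt = linear_add[OF linear_tmap] linear_smult[OF linear_tmap]
  note ks = bilinD[OF K]
  have s1: "tmap id G (tmult mB (tmult m2 m2) (leg12 u2 (basis_vec (b, p))) (leg13 u2 (basis_vec (c, q))))
      = K (basis_vec (b, p)) (basis_vec (c, q))" for b p c q
    by (simp add: KB leg12_def leg13_def tmult_tprod[OF mB bilin_tmult] tmult_tprod[OF b2 b2] u
          tprod_basis tmap_tprod[OF linear_id(1) G])
  have s2: "tmap id G (tmult mB (tmult m2 m2) (leg12 u2 (basis_vec x)) (leg13 u2 (basis_vec y)))
      = K (basis_vec x) (basis_vec y)" for x y
    using s1[of "fst x" "snd x" "fst y" "snd y"] by simp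
  have s3: "tmap id G (tmult mB (tmult m2 m2) (leg12 u2 (basis_vec x)) (leg13 u2 Y))
      = K (basis_vec x) Y" for x
    by (rule lin_unique[where f="\<lambda>Y. tmap id G (tmult mB (tmult m2 m2) (leg12 u2 (basis_vec x)) (leg13 u2 Y))"])
       (auto simp: linear_map_def tsimps lt ks s2 linear_add[OF leg_lin(2)] linear_smult[OF leg_lin(2)])
  show ?thesis
    by (rule lin_unique[where f="\<lambda>X. tmap id G (tmult mB (tmult m2 m2) (leg12 u2 X) (leg13 u2 Y))"])
       (auto simp: linear_map_def tsimps lt ks s3 linear_add[OF leg_lin(1)] linear_smult[OF leg_lin(1)])
qed

theorem theorem3p7:
  fixes m1 :: "('i \<Rightarrow>\<^sub>0 'k::field) \<Rightarrow> ('i \<Rightarrow>\<^sub>0 'k) \<Rightarrow> ('i \<Rightarrow>\<^sub>0 'k)"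
    and m2 :: "('j \<Rightarrow>\<^sub>0 'k) \<Rightarrow> ('j \<Rightarrow>\<^sub>0 'k) \<Rightarrow> ('j \<Rightarrow>\<^sub>0 'k)"
    and mB :: "('b \<Rightarrow>\<^sub>0 'k) \<Rightarrow> ('b \<Rightarrow>\<^sub>0 'k) \<Rightarrow> ('b \<Rightarrow>\<^sub>0 'k)"
    and \<alpha> :: "('i \<Rightarrow>\<^sub>0 'k) \<Rightarrow> ('b \<times> 'j \<Rightarrow>\<^sub>0 'k)"
  assumes H1: "hopf_algebra m1 u1 \<Delta>1 \<epsilon>1 S1"
    and H2: "hopf_algebra m2 u2 \<Delta>2 \<epsilon>2 S2"
    and B: "unital_algebra mB uB"
    and QF: "quantum_family_hom mB uB m1 u1 \<Delta>1 m2 u2 \<Delta>2 \<alpha>"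
  shows "\<forall>a. \<alpha> (S1 a) = tmap id S2 (\<alpha> a)"
proof
  fix a
  define M where "M = tmult mB m2"
  define U where "U = tprod uB u2"
  define E where "E = (\<lambda>a. smult (\<epsilon>1 a) U)"
  define L where "L = (\<lambda>a. \<alpha> (S1 a))"
  define R where "R = (\<lambda>a. tmap id S2 (\<alpha> a))"
  define \<phi> where "\<phi> = (\<lambda>v. smult (\<epsilon>2 v) u2)"
  define \<Phi> where "\<Phi> = (\<lambda>a. tmap id \<phi> (\<alpha> a))"
  note C = conv_def[of M \<Delta>1]
  have A2: "unital_algebra m2 u2" using H2 by (simp add: hopf_algebra_def)
  have A1: "unital_algebra m1 u1" and S1: "linear_map S1"
    and CA1: "\<And>x. assoc3 (tmap \<Delta>1 id (\<Delta>1 x)) = tmap id \<Delta>1 (\<Delta>1 x)"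
    and CUl1: "\<And>x. lin_ext (\<lambda>(i, j). smult (\<epsilon>1 (basis_vec i)) (basis_vec j)) (\<Delta>1 x) = x"
    and CUr1: "\<And>x. lin_ext (\<lambda>(i, j). smult (\<epsilon>1 (basis_vec j)) (basis_vec i)) (\<Delta>1 x) = x"
    and AP1: "\<And>x. lin_ext (\<lambda>(i, j). m1 (S1 (basis_vec i)) (basis_vec j)) (\<Delta>1 x) = smult (\<epsilon>1 x) u1"
    and AP1': "\<And>x. lin_ext (\<lambda>(i, j). m1 (basis_vec i) (S1 (basis_vec j))) (\<Delta>1 x) = smult (\<epsilon>1 x) u1"
    using H1 by (auto simp: hopf_algebra_def)
  have CUl2: "\<And>x. lin_ext (\<lambda>(i, j). smult (\<epsilon>2 (basis_vec i)) (basis_vec j)) (\<Delta>2 x) = x"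
    and AP2': "\<And>x. lin_ext (\<lambda>(i, j). m2 (basis_vec i) (S2 (basis_vec j))) (\<Delta>2 x) = smult (\<epsilon>2 x) u2"
    and S2: "linear_map S2"
    using H2 by (auto simp: hopf_algebra_def)
  have \<alpha>l: "linear_map \<alpha>" and \<alpha>m: "\<And>x y. \<alpha> (m1 x y) = M (\<alpha> x) (\<alpha> y)" and \<alpha>u: "\<alpha> u1 = U"
    and QFe: "\<And>a. lin_ext (\<lambda>(i, j). tmult mB (tmult m2 m2) (leg12 u2 (\<alpha> (basis_vec i))) (leg13 u2 (\<alpha> (basis_vec j))))
            (\<Delta>1 a) = tmap id \<Delta>2 (\<alpha> a)"
    using QF by (auto simp: quantum_family_hom_def unital_algebra_hom_def M_def U_def)
  have UM: "unital_algebra M U" unfolding M_def U_def by (rule tmult_unital[OF B A2])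
  have Mb: "bilin M" by (rule unital_bilin[OF UM])
  have MA: "\<And>x y z. M (M x y) z = M x (M y z)" and MU: "\<And>x. M U x = x" "\<And>x. M x U = x"
    using UM by (auto simp: unital_algebra_def)
  note lt = linear_add[OF linear_tmap] linear_smult[OF linear_tmap]
  have Ll: "linear_map L" using \<alpha>l S1 by (simp add: L_def linear_map_def)
  have Rl: "linear_map R" using \<alpha>l by (simp add: R_def linear_map_def lt)
  have \<Phi>l: "linear_map \<Phi>" using \<alpha>l by (simp add: \<Phi>_def linear_map_def lt)
  note assoc = conv_assoc[OF Mb MA CA1]
  have LA: "conv M \<Delta>1 L \<alpha> = E"
  proof
    fix a
    have "conv M \<Delta>1 L \<alpha> a = lin_ext (\<lambda>p. \<alpha> (case p of (i, j) \<Rightarrow> m1 (S1 (basis_vec i)) (basis_vec j))) (\<Delta>1 a)"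
      unfolding C L_def by (rule lin_ext_cong) (auto simp: \<alpha>m)
    also have "\<dots> = E a"
      by (simp add: linear_lin_ext_comm[OF \<alpha>l, symmetric] AP1 linear_smult[OF \<alpha>l] \<alpha>u E_def)
    finally show "conv M \<Delta>1 L \<alpha> a = E a" .
  qed
  have AL: "conv M \<Delta>1 \<alpha> L = E"
  proof
    fix a
    have "conv M \<Delta>1 \<alpha> L a = lin_ext (\<lambda>p. \<alpha> (case p of (i, j) \<Rightarrow> m1 (basis_vec i) (S1 (basis_vec j)))) (\<Delta>1 a)"
      unfolding C L_def by (rule lin_ext_cong) (auto simp: \<alpha>m)
    also have "\<dots> = E a"
      by (simp add: linear_lin_ext_comm[OF \<alpha>l, symmetric] AP1' linear_smult[OF \<alpha>l] \<alpha>u E_def)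
    finally show "conv M \<Delta>1 \<alpha> L a = E a" .
  qed
  define G1 :: "('j \<times> 'j \<Rightarrow>\<^sub>0 'k) \<Rightarrow> ('j \<Rightarrow>\<^sub>0 'k)" where "G1 = lin_ext (\<lambda>(i, j). smult (\<epsilon>2 (basis_vec i)) (basis_vec j))"
  define G2 :: "('j \<times> 'j \<Rightarrow>\<^sub>0 'k) \<Rightarrow> ('j \<Rightarrow>\<^sub>0 'k)" where "G2 = lin_ext (\<lambda>(i, j). m2 (basis_vec i) (S2 (basis_vec j)))"
  have m2b: "bilin m2" by (rule unital_bilin[OF A2])
  have m2u: "m2 u2 x = x" for x using A2 by (auto simp: unital_algebra_def)
  have mBb: "bilin mB" by (rule unital_bilin[OF B])
  note tt = tmult_tprod[OF mBb m2b]
  note ms = bilinD[OF Mb]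
  have K1: "tmap id G1 (tmult mB (tmult m2 m2) (leg12 u2 X) (leg13 u2 Y)) = M (tmap id \<phi> X) Y" for X Y
  proof (rule legs[OF mBb A2])
    show "linear_map G1" by (simp add: G1_def)
    show "bilin (\<lambda>X Y. M (tmap id \<phi> X) Y)"
      by (simp add: bilin_def linear_map_def ms lt)
    show "M (tmap id \<phi> (basis_vec (b, p))) (basis_vec (c, q)) =
        tprod (mB (basis_vec b) (basis_vec c)) (G1 (basis_vec (p, q)))" for b p c q
      by (simp add: G1_def tmap_basis) (simp add: M_def tmap_basis tprod_basis[symmetric] tt \<phi>_def bilinD[OF m2b] m2u)
  qed
  have K2: "tmap id G2 (tmult mB (tmult m2 m2) (leg12 u2 X) (leg13 u2 Y)) = M X (tmap id S2 Y)" for X Y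
  proof (rule legs[OF mBb A2])
    show "linear_map G2" by (simp add: G2_def)
    show "bilin (\<lambda>X Y. M X (tmap id S2 Y))"
      by (simp add: bilin_def linear_map_def ms lt)
    show "M (basis_vec (b, p)) (tmap id S2 (basis_vec (c, q))) =
        tprod (mB (basis_vec b) (basis_vec c)) (G2 (basis_vec (p, q)))" for b p c q
      by (simp add: G2_def tmap_basis) (simp add: M_def tmap_basis tprod_basis[symmetric] tt)
  qed
  have PA: "conv M \<Delta>1 \<Phi> \<alpha> = \<alpha>"
  proof
    fix a
    have "conv M \<Delta>1 \<Phi> \<alpha> a = lin_ext (\<lambda>p. tmap id G1 (case p of (i, j) \<Rightarrow>
        tmult mB (tmult m2 m2) (leg12 u2 (\<alpha> (basis_vec i))) (leg13 u2 (\<alpha> (basis_vec j))))) (\<Delta>1 a)"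
      unfolding C by (rule lin_ext_cong) (auto simp: K1 \<Phi>_def)
    also have "\<dots> = tmap id G1 (tmap id \<Delta>2 (\<alpha> a))"
      by (simp add: linear_lin_ext_comm[OF linear_tmap, symmetric] QFe)
    also have "\<dots> = \<alpha> a"
      by (simp add: tmap_comp G1_def CUl2 tmap_id)
    finally show "conv M \<Delta>1 \<Phi> \<alpha> a = \<alpha> a" .
  qed
  have AR: "conv M \<Delta>1 \<alpha> R = \<Phi>"
  proof
    fix a
    have "conv M \<Delta>1 \<alpha> R a = lin_ext (\<lambda>p. tmap id G2 (case p of (i, j) \<Rightarrow>
        tmult mB (tmult m2 m2) (leg12 u2 (\<alpha> (basis_vec i))) (leg13 u2 (\<alpha> (basis_vec j))))) (\<Delta>1 a)"
      unfolding C by (rule lin_ext_cong) (auto simp: K2 R_def)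
    also have "\<dots> = tmap id G2 (tmap id \<Delta>2 (\<alpha> a))"
      by (simp add: linear_lin_ext_comm[OF linear_tmap, symmetric] QFe)
    also have "\<dots> = \<Phi> a"
      by (simp add: tmap_comp G2_def AP2' \<Phi>_def \<phi>_def id_def)
    finally show "conv M \<Delta>1 \<alpha> R a = \<Phi> a" .
  qed
  have PE: "\<Phi> = E"
  proof
    fix a
    have "\<Phi> a = conv M \<Delta>1 \<Phi> E a"
      unfolding E_def by (rule conv_unit_right[OF \<Phi>l Mb MU(2) CUr1, symmetric])
    also have "\<dots> = conv M \<Delta>1 (conv M \<Delta>1 \<Phi> \<alpha>) L a" by (simp add: AL[symmetric] assoc)
    also have "\<dots> = E a" by (simp add: PA AL)
    finally show "\<Phi> a = E a" .
  qed
  have "R a = conv M \<Delta>1 E R a"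
    unfolding E_def by (rule conv_unit_left[OF Rl Mb MU(1) CUl1, symmetric])
  also have "\<dots> = conv M \<Delta>1 L (conv M \<Delta>1 \<alpha> R) a" by (simp add: LA[symmetric] assoc)
  also have "\<dots> = L a" unfolding AR PE E_def by (rule conv_unit_right[OF Ll Mb MU(2) CUr1])
  finally show "\<alpha> (S1 a) = tmap id S2 (\<alpha> a)" by (simp add: L_def R_def)
qed

end
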